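(* Let $k \geq 1$ be an integer. Let $F_1$ and $F_2$ be two anonymized fragments of a relation over a common class attribute, each a finite multiset of tuples of the form $(q, c)$, where $q$ is a (generalized) quasi-identifier value of that fragment and $c$ is a class value. Partition $F_1$ into equivalence classes $EQ_{11}, \dots, EQ_{1n}$ and $F_2$ into equivalence classes $EQ_{21}, \dots, EQ_{2m}$, where an equivalence class is the set of all tuples of the fragment sharing the same quasi-identifier value, and assume each fragment satisfies $k$-anonymity, i.e. $|EQ_{1i}| \geq k$ and $|EQ_{2j}| \geq k$ for all $i,j$. For an equivalence class $EQ$ let $C(EQ)$ denote the set of class values occurring in it and $freq(c, EQ)$ the number of tuples in $EQ$ with class value $c$; write $C_{1i} = C(EQ_{1i})$ and $C_{2j} = C(EQ_{2j})$. Then the fragmentation $\{F_1, F_2\}$ is $k$-anonymity non-reconstructible (i.e. the relation $F_1 \Join F_2$ obtained by joining the two fragments on the class attribute satisfies $k$-anonymity) if and only if for every pair $(i,j)$ one of the following holds: (1) $\sum_{c \in C_{1i} \cap C_{2j}} freq(c, EQ_{1i}) \cdot freq(c, EQ_{2j}) = 0$, or (2) $\sum_{c \in C_{1i} \cap C_{2j}} freq(c, EQ_{1i}) \cdot freq(c, EQ_{2j}) \geq k$.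
   Context: The join $F_1 \Join F_2$ on the class attribute is the multiset of tuples $(q_1, q_2, c)$ obtained from every pair of tuples $(q_1, c) \in F_1$ and $(q_2, c) \in F_2$ having the same class value $c$ (counted with multiplicity). A multiset of tuples satisfies $k$-anonymity if every equivalence class (maximal set of tuples sharing the same quasi-identifier values, here the same pair $(q_1,q_2)$) that is nonempty contains at least $k$ tuples. A fragmentation $\{F_1, F_2\}$ in which each fragment is $k$-anonymous is called $k$-anonymity non-reconstructible if the relation resulting from joining its fragments on the class attribute satisfies $k$-anonymity. *)

theory Defs
  imports Main "HOL-Library.Multiset"
begin

definition eq_class :: "('q \<times> 'c) multiset \<Rightarrow> 'q \<Rightarrow> ('q \<times> 'c) multiset" where
  "eq_class F q = filter_mset (\<lambda>t. fst t = q) F"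

definition qids :: "('q \<times> 'c) multiset \<Rightarrow> 'q set" where
  "qids F = fst ` set_mset F"

definition k_anonymous :: "nat \<Rightarrow> ('q \<times> 'c) multiset \<Rightarrow> bool" where
  "k_anonymous k F \<longleftrightarrow> (\<forall>q \<in> qids F. size (eq_class F q) \<ge> k)"

text \<open>Join on the class attribute, with multiplicity: tuples (q1, q2, c) viewed as
  quasi-identifier (q1, q2) and class c.\<close>
definition join_class :: "('q1 \<times> 'c) multiset \<Rightarrow> ('q2 \<times> 'c) multiset \<Rightarrow> (('q1 \<times> 'q2) \<times> 'c) multiset" where
  "join_class F1 F2 = sum_mset (image_mset (\<lambda>(q1, c). image_mset (\<lambda>(q2, _). ((q1, q2), c)) (filter_mset (\<lambda>t. snd t = c) F2)) F1)"

definition classes_of :: "('q \<times> 'c) multiset \<Rightarrow> 'c set" where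
  "classes_of EQ = snd ` set_mset EQ"

definition freq :: "'c \<Rightarrow> ('q \<times> 'c) multiset \<Rightarrow> nat" where
  "freq c EQ = count (image_mset snd EQ) c"

definition k_anon_non_reconstructible :: "nat \<Rightarrow> ('q1 \<times> 'c) multiset \<Rightarrow> ('q2 \<times> 'c) multiset \<Rightarrow> bool" where
  "k_anon_non_reconstructible k F1 F2 \<longleftrightarrow>
     k_anonymous k F1 \<and> k_anonymous k F2 \<and> k_anonymous k (join_class F1 F2)"

end

theory Submission
  imports Defs
begin

lemma join_add: "join_class (add_mset x A) B =
   image_mset (\<lambda>(q2, _). ((fst x, q2), snd x)) (filter_mset (\<lambda>t. snd t = snd x) B) + join_class A B"
  by (cases x) (simp add: join_class_def)

lemma join_empty[simp]: "join_class {#} B = {#}"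
  by (simp add: join_class_def)

lemma join_filter: "filter_mset (\<lambda>t. fst t = (q1,q2)) (join_class A B) = join_class (eq_class A q1) (eq_class B q2)"
proof (induction A)
  case empty then show ?case by (simp add: eq_class_def)
next
  case (add x A)
  obtain q c where x: "x = (q,c)" by (cases x)
  have "filter_mset (\<lambda>t. fst t = (q1,q2)) (image_mset (\<lambda>(q2, _). ((q, q2), c)) (filter_mset (\<lambda>t. snd t = c) B))
     = (if q = q1 then image_mset (\<lambda>(q2, _). ((q, q2), c)) (filter_mset (\<lambda>t. snd t = c) (eq_class B q2)) else {#})"
    by (induction B) (auto simp: eq_class_def)
  then show ?case using add by (auto simp: x join_add eq_class_def)
qed

lemma freq_size: "freq c B = size (filter_mset (\<lambda>t. snd t = c) B)"
  by (induction B) (auto simp: freq_def)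

lemma freq_add: "freq c' (add_mset (q,c) A) = freq c' A + (if c' = c then 1 else 0)"
  by (simp add: freq_def)

lemma size_join_S: "finite S \<Longrightarrow> snd ` set_mset A \<subseteq> S \<Longrightarrow>
   size (join_class A B) = (\<Sum>c\<in>S. freq c A * freq c B)"
proof (induction A)
  case empty then show ?case by (simp add: freq_def)
next
  case (add x A)
  obtain q c where x: "x = (q,c)" by (cases x)
  have cS: "c \<in> S" using add.prems x by auto
  have "(\<Sum>c'\<in>S. freq c' (add_mset x A) * freq c' B)
      = (\<Sum>c'\<in>S. freq c' A * freq c' B) + (\<Sum>c'\<in>S. (if c' = c then freq c' B else 0))"
    unfolding sum.distrib[symmetric] by (rule sum.cong) (auto simp: x freq_add)
  also have "(\<Sum>c'\<in>S. (if c' = c then freq c' B else 0)) = freq c B"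
    using cS add.prems(1) by (simp add: sum.delta)
  finally show ?case using add by (simp add: x join_add freq_size)
qed

lemma size_join: "size (join_class A B) =
   (\<Sum>c \<in> classes_of A \<inter> classes_of B. freq c A * freq c B)"
proof -
  have "size (join_class A B) = (\<Sum>c\<in>classes_of A. freq c A * freq c B)"
    by (rule size_join_S) (auto simp: classes_of_def)
  also have "\<dots> = (\<Sum>c \<in> classes_of A \<inter> classes_of B. freq c A * freq c B)"
  proof (rule sum.mono_neutral_right)
    show "finite (classes_of A)" by (simp add: classes_of_def)
    show "\<forall>i\<in>classes_of A - classes_of A \<inter> classes_of B. freq i A * freq i B = 0"
      by (auto simp: classes_of_def freq_def image_iff count_eq_zero_iff)
  qed auto
  finally show ?thesis .
qed

lemma qids_iff: "q \<in> qids F \<longleftrightarrow> size (eq_class F q) \<noteq> 0"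
  by (auto simp: qids_def eq_class_def filter_mset_eq_conv)

lemma join_none: "eq_class A q = {#} \<Longrightarrow> join_class A B = {#} \<Longrightarrow> True" by simp

theorem theorem4p1:
  fixes k :: nat and F1 :: "('q1 \<times> 'c) multiset" and F2 :: "('q2 \<times> 'c) multiset"
  assumes "k \<ge> 1"
    and "k_anonymous k F1" and "k_anonymous k F2"
  shows "k_anon_non_reconstructible k F1 F2 \<longleftrightarrow>
    (\<forall>q1 \<in> qids F1. \<forall>q2 \<in> qids F2.
       (let EQ1 = eq_class F1 q1; EQ2 = eq_class F2 q2;
            s = (\<Sum>c \<in> classes_of EQ1 \<inter> classes_of EQ2. freq c EQ1 * freq c EQ2)
        in s = 0 \<or> s \<ge> k))"
proof -
  define s where "s q1 q2 = size (join_class (eq_class F1 q1) (eq_class F2 q2))" for q1 q2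
  have seq: "size (eq_class (join_class F1 F2) (q1,q2)) = s q1 q2" for q1 q2
    using join_filter[of q1 q2 F1 F2] by (simp add: s_def eq_class_def)
  have s0: "q1 \<notin> qids F1 \<or> q2 \<notin> qids F2 \<Longrightarrow> s q1 q2 = 0" for q1 q2
  proof -
    assume "q1 \<notin> qids F1 \<or> q2 \<notin> qids F2"
    hence "eq_class F1 q1 = {#} \<or> eq_class F2 q2 = {#}" using qids_iff[of q1 F1] qids_iff[of q2 F2] by auto
    thus ?thesis by (auto simp: s_def size_join classes_of_def)
  qed
  have "k_anonymous k (join_class F1 F2) \<longleftrightarrow> (\<forall>q1 q2. s q1 q2 = 0 \<or> s q1 q2 \<ge> k)"
    unfolding k_anonymous_def
    by (metis qids_iff seq surj_pair)
  also have "\<dots> \<longleftrightarrow> (\<forall>q1 \<in> qids F1. \<forall>q2 \<in> qids F2. s q1 q2 = 0 \<or> s q1 q2 \<ge> k)"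
    using s0 by blast
  finally show ?thesis using assms
    by (simp add: k_anon_non_reconstructible_def s_def size_join Let_def)
qed

end
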